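(* Let $X$ be a countably compact non-compact space with linear Lindelöf number $\kappa\ge\omega_1$, and let $Y$ be an $[\aleph_0,\kappa]$-compact C-closed space. Then: (a) for each continuous $f:X\to Y$, $f(X)$ is compact and there is $c\in Y$ such that $f^{-1}(\{c\})$ is non-Lindelöf; (b) if $X$ satisfies $\mathsf{IC}$ and $Y$ has $G_\delta$ points, then $\mathsf{EC}(X,Y)$ holds; (c) if $X$ satisfies $\mathsf{I0}$ and $Y$ is Tychonoff with $G_\delta$ points, then $\mathsf{EC}(X,Y)$ holds.
   Context: All spaces are Hausdorff and maps continuous. The linear Lindelöf number of $X$ is the least $\kappa$ such that every cover of $X$ by open sets linearly ordered by inclusion has a subcover of cardinality $\le\kappa$. A space is $[\aleph_0,\kappa]$-compact if every open cover of cardinality $\le\kappa$ has a countable subcover. A space is C-closed if every countably compact subspace is closed. A $0$-set is $g^{-1}(\{0\})$ for a continuous $g:X\to[0,1]$. $X$ satisfies $\mathsf{IC}$ (resp. $\mathsf{I0}$) if of any two disjoint closed subsets (resp. $0$-sets) at least one is Lindelöf. For non-Lindelöf $X$, $\mathsf{EC}(X,Y)$ means: for every continuous $f:X\to Y$ there is a Lindelöf $Z\subset X$ with $f(X\setminus Z)$ a singleton. *)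

theory Defs
  imports "HOL-Analysis.Analysis" "HOL-Library.Equipollence"
begin

definition countably_compact_space :: "'a topology \<Rightarrow> bool" where
  "countably_compact_space X \<longleftrightarrow>
     (\<forall>\<U>. countable \<U> \<and> (\<forall>U\<in>\<U>. openin X U) \<and> topspace X \<subseteq> \<Union>\<U>
        \<longrightarrow> (\<exists>\<V>. finite \<V> \<and> \<V> \<subseteq> \<U> \<and> topspace X \<subseteq> \<Union>\<V>))"

definition Lindelof_in :: "'a topology \<Rightarrow> 'a set \<Rightarrow> bool" where
  "Lindelof_in X S \<longleftrightarrow> S \<subseteq> topspace X \<and> Lindelof_space (subtopology X S)"

definition linear_Lindelof_bound :: "'a topology \<Rightarrow> 'k set \<Rightarrow> bool" where
  "linear_Lindelof_bound X K \<longleftrightarrow>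
     (\<forall>\<U>. (\<forall>U\<in>\<U>. openin X U) \<and> topspace X \<subseteq> \<Union>\<U>
          \<and> (\<forall>U\<in>\<U>. \<forall>V\<in>\<U>. U \<subseteq> V \<or> V \<subseteq> U)
        \<longrightarrow> (\<exists>\<V>. \<V> \<subseteq> \<U> \<and> \<V> \<lesssim> K \<and> topspace X \<subseteq> \<Union>\<V>))"

text \<open>The linear Lindelof number of X equals |K|: |K| is the least cardinal that
  is such a bound (every smaller cardinal is represented by a subset of K).\<close>
definition linear_Lindelof_number_is :: "'a topology \<Rightarrow> 'k set \<Rightarrow> bool" where
  "linear_Lindelof_number_is X K \<longleftrightarrow>
     linear_Lindelof_bound X K \<and> (\<forall>J. J \<subseteq> K \<and> J \<prec> K \<longrightarrow> \<not> linear_Lindelof_bound X J)"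

definition aleph0_K_compact :: "'a topology \<Rightarrow> 'k set \<Rightarrow> bool" where
  "aleph0_K_compact Y K \<longleftrightarrow>
     (\<forall>\<U>. \<U> \<lesssim> K \<and> (\<forall>U\<in>\<U>. openin Y U) \<and> topspace Y \<subseteq> \<Union>\<U>
        \<longrightarrow> (\<exists>\<V>. countable \<V> \<and> \<V> \<subseteq> \<U> \<and> topspace Y \<subseteq> \<Union>\<V>))"

definition C_closed :: "'a topology \<Rightarrow> bool" where
  "C_closed Y \<longleftrightarrow>
     (\<forall>A. A \<subseteq> topspace Y \<and> countably_compact_space (subtopology Y A) \<longrightarrow> closedin Y A)"

definition zero_set_in :: "'a topology \<Rightarrow> 'a set \<Rightarrow> bool" where
  "zero_set_in X Z \<longleftrightarrow>
     (\<exists>g. continuous_map X (top_of_set {0..(1::real)}) g \<and> Z = {x \<in> topspace X. g x = 0})"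

definition IC :: "'a topology \<Rightarrow> bool" where
  "IC X \<longleftrightarrow> (\<forall>A B. closedin X A \<and> closedin X B \<and> A \<inter> B = {}
                 \<longrightarrow> Lindelof_in X A \<or> Lindelof_in X B)"

definition I0 :: "'a topology \<Rightarrow> bool" where
  "I0 X \<longleftrightarrow> (\<forall>A B. zero_set_in X A \<and> zero_set_in X B \<and> A \<inter> B = {}
                 \<longrightarrow> Lindelof_in X A \<or> Lindelof_in X B)"

definition G_delta_points :: "'a topology \<Rightarrow> bool" where
  "G_delta_points Y \<longleftrightarrow> (\<forall>y \<in> topspace Y. gdelta_in Y {y})"

definition Tychonoff_space :: "'a topology \<Rightarrow> bool" where
  "Tychonoff_space Y \<longleftrightarrow> completely_regular_space Y \<and> Hausdorff_space Y"

definition EC :: "'a topology \<Rightarrow> 'b topology \<Rightarrow> bool" where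
  "EC X Y \<longleftrightarrow> (\<forall>f. continuous_map X Y f \<longrightarrow>
       (\<exists>Z. Lindelof_in X Z \<and> (\<exists>c. f ` (topspace X - Z) = {c})))"

end

theory Submission
  imports Defs
begin

lemma Lindelof_in_iff:
  "Lindelof_in X S \<longleftrightarrow> S \<subseteq> topspace X \<and>
     (\<forall>\<U>. (\<forall>U \<in> \<U>. openin X U) \<and> S \<subseteq> \<Union>\<U> \<longrightarrow> (\<exists>V. countable V \<and> V \<subseteq> \<U> \<and> S \<subseteq> \<Union>V))"
proof (cases "S \<subseteq> topspace X")
  case True
  then show ?thesis unfolding Lindelof_in_def by (simp add: Lindelof_space_subtopology_subset)
next
  case False
  then show ?thesis unfolding Lindelof_in_def by simp
qed

lemma Lindelof_in_closed_subset:
  assumes "Lindelof_in X S" "closedin X C" "C \<subseteq> S"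
  shows "Lindelof_in X C"
proof -
  have "closedin (subtopology X S) C"
    unfolding closedin_subtopology
    by (rule exI[of _ C]) (use assms in auto)
  then have "Lindelof_space (subtopology (subtopology X S) C)"
    using assms(1) Lindelof_space_closedin_subtopology[of "subtopology X S" C] unfolding Lindelof_in_def by simp
  moreover have "S \<inter> C = C" using assms(3) by blast
  ultimately show ?thesis
    using assms(2) closedin_subset[OF assms(2)] by (simp add: Lindelof_in_def subtopology_subtopology)
qed



lemma cs_empty:
  assumes "topspace X = {}"
  shows "compact_space X"
  unfolding compact_space_def compactin_def
proof (intro conjI allI impI)
  show "topspace X \<subseteq> topspace X" by simp
  fix \<U> :: "'a set set"
  show "\<exists>F. finite F \<and> F \<subseteq> \<U> \<and> topspace X \<subseteq> \<Union>F"
    by (rule exI[of _ "{}"]) (simp add: assms)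
qed

lemma compactinE:
  assumes "compactin Y S" "\<forall>U\<in>\<U>. openin Y U" "S \<subseteq> \<Union>\<U>"
  obtains F where "finite F" "F \<subseteq> \<U>" "S \<subseteq> \<Union>F"
proof -
  have "\<forall>\<U>. (\<forall>U\<in>\<U>. openin Y U) \<and> S \<subseteq> \<Union>\<U> \<longrightarrow> (\<exists>F. finite F \<and> F \<subseteq> \<U> \<and> S \<subseteq> \<Union>F)"
    using assms(1) unfolding compactin_def by (rule conjunct2)
  then have "\<exists>F. finite F \<and> F \<subseteq> \<U> \<and> S \<subseteq> \<Union>F" using assms(2,3) by simp
  then show ?thesis using that by blast
qed

lemma not_compactinE:
  assumes "\<not> compactin Y S" "S \<subseteq> topspace Y"
  obtains \<U> where "\<forall>U\<in>\<U>. openin Y U" "S \<subseteq> \<Union>\<U>" "\<And>F. finite F \<Longrightarrow> F \<subseteq> \<U> \<Longrightarrow> \<not> S \<subseteq> \<Union>F"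
proof -
  have "\<not> (\<forall>\<U>. (\<forall>U\<in>\<U>. openin Y U) \<and> S \<subseteq> \<Union>\<U> \<longrightarrow> (\<exists>F. finite F \<and> F \<subseteq> \<U> \<and> S \<subseteq> \<Union>F))"
    using assms by (simp only: compactin_def simp_thms)
  then obtain \<U> where "(\<forall>U\<in>\<U>. openin Y U) \<and> S \<subseteq> \<Union>\<U>" "\<not> (\<exists>F. finite F \<and> F \<subseteq> \<U> \<and> S \<subseteq> \<Union>F)"
    by (meson)
  then show ?thesis using that by meson
qed

lemma llbE:
  assumes "linear_Lindelof_bound X K" "\<forall>U\<in>\<U>. openin X U" "topspace X \<subseteq> \<Union>\<U>"
    "\<forall>U\<in>\<U>. \<forall>V\<in>\<U>. U \<subseteq> V \<or> V \<subseteq> U"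
  obtains \<V> where "\<V> \<subseteq> \<U>" "\<V> \<lesssim> K" "topspace X \<subseteq> \<Union>\<V>"
proof -
  have "\<forall>\<U>. (\<forall>U\<in>\<U>. openin X U) \<and> topspace X \<subseteq> \<Union>\<U>
          \<and> (\<forall>U\<in>\<U>. \<forall>V\<in>\<U>. U \<subseteq> V \<or> V \<subseteq> U)
        \<longrightarrow> (\<exists>\<V>. \<V> \<subseteq> \<U> \<and> \<V> \<lesssim> K \<and> topspace X \<subseteq> \<Union>\<V>)"
    using assms(1) by (simp only: linear_Lindelof_bound_def)
  then have "\<exists>\<V>. \<V> \<subseteq> \<U> \<and> \<V> \<lesssim> K \<and> topspace X \<subseteq> \<Union>\<V>" using assms(2-4) by simp
  then show ?thesis using that by blast
qed

lemma akE:
  assumes "aleph0_K_compact Y K" "\<U> \<lesssim> K" "\<forall>U\<in>\<U>. openin Y U" "topspace Y \<subseteq> \<Union>\<U>"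
  obtains \<V> where "countable \<V>" "\<V> \<subseteq> \<U>" "topspace Y \<subseteq> \<Union>\<V>"
proof -
  have "\<forall>\<U>. \<U> \<lesssim> K \<and> (\<forall>U\<in>\<U>. openin Y U) \<and> topspace Y \<subseteq> \<Union>\<U>
        \<longrightarrow> (\<exists>\<V>. countable \<V> \<and> \<V> \<subseteq> \<U> \<and> topspace Y \<subseteq> \<Union>\<V>)"
    using assms(1) by (simp only: aleph0_K_compact_def)
  then have "\<exists>\<V>. countable \<V> \<and> \<V> \<subseteq> \<U> \<and> topspace Y \<subseteq> \<Union>\<V>" using assms(2-4) by simp
  then show ?thesis using that by blast
qed

lemma chain_compactin:
  assumes S: "S \<subseteq> topspace Y"
    and ch: "\<And>\<C>. (\<forall>C\<in>\<C>. openin Y C) \<Longrightarrow> (\<forall>U\<in>\<C>. \<forall>V\<in>\<C>. U \<subseteq> V \<or> V \<subseteq> U) \<Longrightarrow> S \<subseteq> \<Union>\<C>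
             \<Longrightarrow> \<exists>F. finite F \<and> F \<subseteq> \<C> \<and> S \<subseteq> \<Union>F"
  shows "compactin Y S"
proof (rule ccontr)
  assume "\<not> compactin Y S"
  then obtain \<U> where U: "\<forall>U\<in>\<U>. openin Y U" "S \<subseteq> \<Union>\<U>"
    and nf: "\<And>F. finite F \<Longrightarrow> F \<subseteq> \<U> \<Longrightarrow> \<not> S \<subseteq> \<Union>F"
    using S by (rule not_compactinE) blast
  define A where "A = {V. openin Y V \<and> \<not>(\<exists>F. finite F \<and> F \<subseteq> \<U> \<and> S \<subseteq> V \<union> \<Union>F)}"
  have "\<forall>C\<in>chains A. \<Union>C \<in> A"
  proof
    fix C assume C: "C \<in> chains A"
    have CA: "C \<subseteq> A" using C chainsD2 by blast
    have opC: "openin Y (\<Union>C)" using CA by (auto simp: A_def)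
    show "\<Union>C \<in> A"
    proof (rule ccontr)
      assume "\<Union>C \<notin> A"
      then obtain F where F: "finite F" "F \<subseteq> \<U>" "S \<subseteq> \<Union>C \<union> \<Union>F"
        using opC by (auto simp: A_def)
      show False
      proof (cases "C = {}")
        case True
        then show False using F nf by auto
      next
        case False
        define \<C> where "\<C> = (\<lambda>V. V \<union> \<Union>F) ` C"
        have "\<forall>C\<in>\<C>. openin Y C"
        proof
          fix D assume "D \<in> \<C>"
          then obtain V where "V \<in> C" "D = V \<union> \<Union>F" by (auto simp: \<C>_def)
          moreover have "openin Y V" using CA \<open>V \<in> C\<close> by (auto simp: A_def)
          moreover have "openin Y (\<Union>F)" using F U by (intro openin_Union) auto
          ultimately show "openin Y D" by auto
        qed
        moreover have "\<forall>U\<in>\<C>. \<forall>V\<in>\<C>. U \<subseteq> V \<or> V \<subseteq> U"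
          using chainsD[OF C] by (auto simp: \<C>_def)
        moreover have "S \<subseteq> \<Union>\<C>"
        proof
          fix s assume s: "s \<in> S"
          obtain V0 where V0: "V0 \<in> C" using False by blast
          have "s \<in> \<Union>C \<or> s \<in> \<Union>F" using s F by blast
          then show "s \<in> \<Union>\<C>"
          proof
            assume "s \<in> \<Union>C"
            then obtain V where "V \<in> C" "s \<in> V" by blast
            then show ?thesis unfolding \<C>_def by blast
          next
            assume "s \<in> \<Union>F"
            then show ?thesis using V0 unfolding \<C>_def by blast
          qed
        qed
        ultimately have "\<exists>G. finite G \<and> G \<subseteq> \<C> \<and> S \<subseteq> \<Union>G" by (rule ch)
        then obtain G where G: "finite G" "G \<subseteq> \<C>" "S \<subseteq> \<Union>G" by blast
        then obtain G' where G': "G' \<subseteq> C" "finite G'" "G = (\<lambda>V. V \<union> \<Union>F) ` G'"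
          unfolding \<C>_def by (meson finite_subset_image)
        show False
        proof (cases "G' = {}")
          case True
          then show ?thesis using G G' F nf by auto
        next
          case False
          have "subset.chain UNIV G'"
            using chainsD[OF C] G' by (auto simp: subset_chain_def)
          then have "\<Union>G' \<in> G'" using Union_in_chain G' False by blast
          moreover have "S \<subseteq> \<Union>G' \<union> \<Union>F"
          proof
            fix s assume "s \<in> S"
            then obtain W where "W \<in> G" "s \<in> W" using G by blast
            then obtain V where "V \<in> G'" "W = V \<union> \<Union>F" using G' by blast
            then show "s \<in> \<Union>G' \<union> \<Union>F" using \<open>s \<in> W\<close> by blast
          qed
          ultimately show False using G' CA F by (auto simp: A_def)
        qed
      qed
    qed
  qed
  then have "\<exists>M\<in>A. \<forall>X\<in>A. M \<subseteq> X \<longrightarrow> X = M" by (rule Zorn_Lemma)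
  then obtain M where M: "M \<in> A" and max: "\<And>X. X \<in> A \<Longrightarrow> M \<subseteq> X \<Longrightarrow> X = M"
    by blast
  have nM: "\<And>F. finite F \<Longrightarrow> F \<subseteq> \<U> \<Longrightarrow> \<not> S \<subseteq> M \<union> \<Union>F"
    using M unfolding A_def by blast
  have "U \<subseteq> M" if "U \<in> \<U>" for U
  proof -
    have "M \<union> U \<in> A"
    proof -
      have "openin Y (M \<union> U)" using M U that by (auto simp: A_def)
      moreover have "\<not>(\<exists>F. finite F \<and> F \<subseteq> \<U> \<and> S \<subseteq> (M \<union> U) \<union> \<Union>F)"
      proof
        assume "\<exists>F. finite F \<and> F \<subseteq> \<U> \<and> S \<subseteq> (M \<union> U) \<union> \<Union>F"
        then obtain F where "finite F" "F \<subseteq> \<U>" "S \<subseteq> (M \<union> U) \<union> \<Union>F" by blast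
        then have "finite (insert U F)" "insert U F \<subseteq> \<U>" "S \<subseteq> M \<union> \<Union>(insert U F)"
          using that by auto
        then show False using nM by blast
      qed
      ultimately show ?thesis by (simp add: A_def)
    qed
    then show ?thesis using max by blast
  qed
  then have "S \<subseteq> M \<union> \<Union>{}" using U by blast
  then show False using nM[of "{}"] by simp
qed



lemma ccE:
  assumes "countably_compact_space X" "countable \<U>" "\<forall>U\<in>\<U>. openin X U" "topspace X \<subseteq> \<Union>\<U>"
  obtains \<V> where "finite \<V>" "\<V> \<subseteq> \<U>" "topspace X \<subseteq> \<Union>\<V>"
proof -
  have "\<forall>\<U>. countable \<U> \<and> (\<forall>U\<in>\<U>. openin X U) \<and> topspace X \<subseteq> \<Union>\<U>
        \<longrightarrow> (\<exists>\<V>. finite \<V> \<and> \<V> \<subseteq> \<U> \<and> topspace X \<subseteq> \<Union>\<V>)"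
    using assms(1) by (simp only: countably_compact_space_def)
  then have "\<exists>\<V>. finite \<V> \<and> \<V> \<subseteq> \<U> \<and> topspace X \<subseteq> \<Union>\<V>"
    using assms(2-4) by simp
  then show ?thesis using that by blast
qed

lemma cc_image_cover:
  assumes X: "countably_compact_space X" and f: "continuous_map X Y f"
    and \<C>: "countable \<C>" "\<forall>C\<in>\<C>. openin Y C" "f ` topspace X \<subseteq> \<Union>\<C>"
  shows "\<exists>F. finite F \<and> F \<subseteq> \<C> \<and> f ` topspace X \<subseteq> \<Union>F"
proof -
  define P where "P C = {x \<in> topspace X. f x \<in> C}" for C
  have "countable (P ` \<C>)" using \<C>(1) by (rule countable_image)
  moreover have "\<forall>U\<in>P ` \<C>. openin X U"
  proof
    fix U assume "U \<in> P ` \<C>"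
    then obtain C where "C \<in> \<C>" "U = P C" by blast
    then show "openin X U" unfolding P_def
      using \<C>(2) openin_continuous_map_preimage[OF f] by blast
  qed
  moreover have "topspace X \<subseteq> \<Union>(P ` \<C>)"
  proof
    fix x assume x: "x \<in> topspace X"
    then obtain C where "C \<in> \<C>" "f x \<in> C" using \<C>(3) by blast
    then show "x \<in> \<Union>(P ` \<C>)" using x unfolding P_def by blast
  qed
  ultimately obtain \<V> where V: "finite \<V>" "\<V> \<subseteq> P ` \<C>" "topspace X \<subseteq> \<Union>\<V>"
    by (rule ccE[OF X])
  then obtain F where "F \<subseteq> \<C>" "finite F" "\<V> = P ` F"
    by (meson finite_subset_image)
  have "f ` topspace X \<subseteq> \<Union>F"
  proof
    fix y assume "y \<in> f ` topspace X"
    then obtain x where x: "x \<in> topspace X" "y = f x" by blast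
    then obtain W where "W \<in> \<V>" "x \<in> W" using V by blast
    then obtain C where "C \<in> F" "W = P C" using \<open>\<V> = P ` F\<close> by blast
    then show "y \<in> \<Union>F" using x \<open>x \<in> W\<close> by (auto simp: P_def)
  qed
  then show ?thesis using \<open>F \<subseteq> \<C>\<close> \<open>finite F\<close> by blast
qed

lemma cc_image:
  assumes X: "countably_compact_space X" and f: "continuous_map X Y f"
  shows "countably_compact_space (subtopology Y (f ` topspace X))"
proof -
  have f': "continuous_map X (subtopology Y (f ` topspace X)) f"
    using f by (simp add: continuous_map_into_subtopology)
  have ts: "topspace (subtopology Y (f ` topspace X)) = f ` topspace X"
    using f by (simp add: continuous_map_image_subset_topspace inf.absorb2)
  show ?thesis
    unfolding countably_compact_space_def ts
  proof (intro allI impI)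
    fix \<U> assume H: "countable \<U> \<and> (\<forall>U\<in>\<U>. openin (subtopology Y (f ` topspace X)) U) \<and> f ` topspace X \<subseteq> \<Union>\<U>"
    show "\<exists>\<V>. finite \<V> \<and> \<V> \<subseteq> \<U> \<and> f ` topspace X \<subseteq> \<Union>\<V>"
      using H by (intro cc_image_cover[OF X f']) auto
  qed
qed

lemma cc_closed_sub:
  assumes X: "countably_compact_space X" and C: "closedin X C"
  shows "countably_compact_space (subtopology X C)"
  unfolding countably_compact_space_def
proof (intro allI impI)
  fix \<U> assume U: "countable \<U> \<and> (\<forall>U\<in>\<U>. openin (subtopology X C) U) \<and> topspace (subtopology X C) \<subseteq> \<Union>\<U>"
  have CX: "C \<subseteq> topspace X" using C closedin_subset by blast
  have "\<forall>U\<in>\<U>. \<exists>T. openin X T \<and> U = T \<inter> C" using U by (simp add: openin_subtopology)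
  then obtain g where g: "\<And>U. U \<in> \<U> \<Longrightarrow> openin X (g U) \<and> U = g U \<inter> C" by metis
  have "countable (insert (topspace X - C) (g ` \<U>))" using U by simp
  moreover have "\<forall>W\<in>insert (topspace X - C) (g ` \<U>). openin X W" using g C by auto
  moreover have "topspace X \<subseteq> \<Union>(insert (topspace X - C) (g ` \<U>))"
  proof
    fix x assume x: "x \<in> topspace X"
    show "x \<in> \<Union>(insert (topspace X - C) (g ` \<U>))"
    proof (cases "x \<in> C")
      case True
      then have "x \<in> topspace (subtopology X C)" using x by simp
      then obtain U where "U \<in> \<U>" "x \<in> U" using U by blast
      then have "x \<in> g U" using g by blast
      then show ?thesis using \<open>U \<in> \<U>\<close> by blast
    qed (use x in auto)
  qed
  ultimately obtain \<V> where V: "finite \<V>" "\<V> \<subseteq> insert (topspace X - C) (g ` \<U>)" "topspace X \<subseteq> \<Union>\<V>"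
    by (rule ccE[OF X])
  then have "\<V> - {topspace X - C} \<subseteq> g ` \<U>" "finite (\<V> - {topspace X - C})" by auto
  then obtain F where F: "F \<subseteq> \<U>" "finite F" "\<V> - {topspace X - C} = g ` F"
    by (meson finite_subset_image)
  have "topspace (subtopology X C) \<subseteq> \<Union>F"
  proof
    fix x assume "x \<in> topspace (subtopology X C)"
    then have x: "x \<in> C" "x \<in> topspace X" by auto
    then obtain W where "W \<in> \<V>" "x \<in> W" using V by blast
    then have "W \<in> g ` F" using x F by auto
    then obtain U where "U \<in> F" "W = g U" by blast
    then show "x \<in> \<Union>F" using g F \<open>x \<in> W\<close> x by blast
  qed
  then show "\<exists>\<V>. finite \<V> \<and> \<V> \<subseteq> \<U> \<and> topspace (subtopology X C) \<subseteq> \<Union>\<V>"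
    using F by blast
qed

lemma cc_closed_image_closed:
  assumes X: "countably_compact_space X" and f: "continuous_map X Y f"
    and Y: "C_closed Y" and C: "closedin X C"
  shows "closedin Y (f ` C)"
proof -
  have f': "continuous_map (subtopology X C) Y f"
    using f by (simp add: continuous_map_from_subtopology)
  have "topspace (subtopology X C) = C" using C closedin_subset by auto
  then have "countably_compact_space (subtopology Y (f ` C))"
    using cc_image[OF cc_closed_sub[OF X C] f'] by simp
  moreover have "f ` C \<subseteq> topspace Y"
    using f C closedin_subset continuous_map_image_subset_topspace by fastforce
  ultimately show ?thesis using Y by (simp add: C_closed_def)
qed


lemma image_compact:
  assumes X: "countably_compact_space X" and nc: "\<not> compact_space X"
    and LL: "linear_Lindelof_bound X K" and AK: "aleph0_K_compact Y K"
    and CY: "C_closed Y" and f: "continuous_map X Y f"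
  shows "compactin Y (f ` topspace X)"
proof (rule chain_compactin)
  have ne: "topspace X \<noteq> {}" using nc cs_empty by blast
  show fX: "f ` topspace X \<subseteq> topspace Y"
    using f continuous_map_image_subset_topspace by blast
  have clo: "closedin Y (f ` topspace X)"
    using cc_closed_image_closed[OF X f CY] by simp
  fix \<C> assume Cop: "\<forall>C\<in>\<C>. openin Y C" and Cch: "\<forall>U\<in>\<C>. \<forall>V\<in>\<C>. U \<subseteq> V \<or> V \<subseteq> U"
    and Ccov: "f ` topspace X \<subseteq> \<Union>\<C>"
  define P where "P C = {x \<in> topspace X. f x \<in> C}" for C
  have "\<forall>U\<in>P ` \<C>. openin X U"
    using Cop f by (auto simp: P_def intro: openin_continuous_map_preimage)
  moreover have "topspace X \<subseteq> \<Union>(P ` \<C>)" using Ccov by (auto simp: P_def)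
  moreover have "\<forall>U\<in>P ` \<C>. \<forall>V\<in>P ` \<C>. U \<subseteq> V \<or> V \<subseteq> U"
  proof (intro ballI)
    fix U V assume "U \<in> P ` \<C>" "V \<in> P ` \<C>"
    then obtain C D where "C \<in> \<C>" "D \<in> \<C>" "U = P C" "V = P D" by blast
    then show "U \<subseteq> V \<or> V \<subseteq> U" using Cch by (auto simp: P_def) 
  qed
  ultimately obtain \<V> where V: "\<V> \<subseteq> P ` \<C>" "\<V> \<lesssim> K" "topspace X \<subseteq> \<Union>\<V>"
    by (rule llbE[OF LL])
  define \<C>' where "\<C>' = inv_into \<C> P ` \<V>"
  have C'C: "\<C>' \<subseteq> \<C>"
  proof
    fix C assume "C \<in> \<C>'"
    then obtain V where "V \<in> \<V>" "C = inv_into \<C> P V" unfolding \<C>'_def by blast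
    then show "C \<in> \<C>" using V(1) inv_into_into[of V P \<C>] by blast
  qed
  have C'K: "\<C>' \<lesssim> K" unfolding \<C>'_def using image_lepoll V(2) by (rule lepoll_trans)
  have inv: "P (inv_into \<C> P V) = V" if "V \<in> \<V>" for V
    using that V(1) f_inv_into_f[of V P \<C>] by blast
  have PC': "P ` \<C>' = \<V>"
  proof -
    have "P ` \<C>' = (\<lambda>V. P (inv_into \<C> P V)) ` \<V>" unfolding \<C>'_def by (rule image_image)
    also have "\<dots> = (\<lambda>V. V) ` \<V>" by (rule image_cong) (simp_all add: inv)
    finally show ?thesis by simp
  qed
  have cov': "f ` topspace X \<subseteq> \<Union>\<C>'"
  proof
    fix y assume "y \<in> f ` topspace X"
    then obtain x where x: "x \<in> topspace X" "y = f x" by blast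
    then obtain W where "W \<in> \<V>" "x \<in> W" using V by blast
    then obtain C where "C \<in> \<C>'" "W = P C" using PC' by blast
    then show "y \<in> \<Union>\<C>'" using x \<open>x \<in> W\<close> by (auto simp: P_def)
  qed
  have C'ne: "\<C>' \<noteq> {}" using cov' ne by auto
  define E where "E C = C \<union> (topspace Y - f ` topspace X)" for C
  have "E ` \<C>' \<lesssim> K" using C'K image_lepoll lepoll_trans by blast
  moreover have "\<forall>U\<in>E ` \<C>'. openin Y U" using C'C Cop clo by (auto simp: E_def)
  moreover have "topspace Y \<subseteq> \<Union>(E ` \<C>')"
  proof
    fix y assume y: "y \<in> topspace Y"
    show "y \<in> \<Union>(E ` \<C>')"
    proof (cases "y \<in> f ` topspace X")
      case True
      then obtain C where "C \<in> \<C>'" "y \<in> C" using cov' by blast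
      then show ?thesis by (auto simp: E_def)
    next
      case False
      obtain C where "C \<in> \<C>'" using C'ne by blast
      then show ?thesis using False y by (auto simp: E_def)
    qed
  qed
  ultimately obtain \<D> where D: "countable \<D>" "\<D> \<subseteq> E ` \<C>'" "topspace Y \<subseteq> \<Union>\<D>"
    by (rule akE[OF AK])
  then obtain \<C>3 where C3: "countable \<C>3" "\<C>3 \<subseteq> \<C>'" "\<D> = E ` \<C>3"
    by (meson countable_subset_image)
  have cov3: "f ` topspace X \<subseteq> \<Union>\<C>3"
  proof
    fix y assume y: "y \<in> f ` topspace X"
    then have "y \<in> topspace Y" using fX by blast
    then obtain W where "W \<in> \<D>" "y \<in> W" using D by blast
    then obtain C where "C \<in> \<C>3" "W = E C" using C3 by blast
    then show "y \<in> \<Union>\<C>3" using y \<open>y \<in> W\<close> by (auto simp: E_def)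
  qed
  have op3: "\<forall>C\<in>\<C>3. openin Y C" using C3(2) C'C Cop by blast
  have "\<exists>F. finite F \<and> F \<subseteq> \<C>3 \<and> f ` topspace X \<subseteq> \<Union>F"
    by (rule cc_image_cover[OF X f C3(1) op3 cov3])
  then obtain F where F: "finite F \<and> F \<subseteq> \<C>3 \<and> f ` topspace X \<subseteq> \<Union>F" ..
  have "F \<subseteq> \<C>" using F C3(2) C'C by (meson order_trans)
  then show "\<exists>F. finite F \<and> F \<subseteq> \<C> \<and> f ` topspace X \<subseteq> \<Union>F"
    using F by (intro exI[of _ F]) simp
qed


lemma nonLindelof_fiber:
  assumes X: "countably_compact_space X" and nc: "\<not> compact_space X"
    and HY: "Hausdorff_space Y" and CY: "C_closed Y" and f: "continuous_map X Y f"
    and comp: "compactin Y (f ` topspace X)"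
  shows "\<exists>c \<in> topspace Y. \<not> Lindelof_in X {x \<in> topspace X. f x = c}"
proof -
  have ne: "topspace X \<noteq> {}" using nc cs_empty by blast
  obtain \<V> where Vop: "\<forall>C\<in>\<V>. openin X C" and Vch: "\<forall>U\<in>\<V>. \<forall>V\<in>\<V>. U \<subseteq> V \<or> V \<subseteq> U"
    and Vcov: "topspace X \<subseteq> \<Union>\<V>" and Vnf: "\<And>F. finite F \<Longrightarrow> F \<subseteq> \<V> \<Longrightarrow> \<not> topspace X \<subseteq> \<Union>F"
  proof -
    have "\<not> compactin X (topspace X)" using nc by (simp add: compact_space_def)
    have "\<exists>\<C>. (\<forall>C\<in>\<C>. openin X C) \<and> (\<forall>U\<in>\<C>. \<forall>V\<in>\<C>. U \<subseteq> V \<or> V \<subseteq> U) \<and> topspace X \<subseteq> \<Union>\<C>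
             \<and> \<not> (\<exists>F. finite F \<and> F \<subseteq> \<C> \<and> topspace X \<subseteq> \<Union>F)"
    proof (rule ccontr)
      assume H0: "\<not> (\<exists>\<C>. (\<forall>C\<in>\<C>. openin X C) \<and> (\<forall>U\<in>\<C>. \<forall>V\<in>\<C>. U \<subseteq> V \<or> V \<subseteq> U) \<and> topspace X \<subseteq> \<Union>\<C>
             \<and> \<not> (\<exists>F. finite F \<and> F \<subseteq> \<C> \<and> topspace X \<subseteq> \<Union>F))"
      have "compactin X (topspace X)"
      proof (rule chain_compactin)
        show "topspace X \<subseteq> topspace X" by simp
        fix \<C> assume a: "\<forall>C\<in>\<C>. openin X C" "\<forall>U\<in>\<C>. \<forall>V\<in>\<C>. U \<subseteq> V \<or> V \<subseteq> U" "topspace X \<subseteq> \<Union>\<C>"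
        show "\<exists>F. finite F \<and> F \<subseteq> \<C> \<and> topspace X \<subseteq> \<Union>F"
        proof (rule ccontr)
          assume "\<not> (\<exists>F. finite F \<and> F \<subseteq> \<C> \<and> topspace X \<subseteq> \<Union>F)"
          with a have "(\<forall>C\<in>\<C>. openin X C) \<and> (\<forall>U\<in>\<C>. \<forall>V\<in>\<C>. U \<subseteq> V \<or> V \<subseteq> U) \<and> topspace X \<subseteq> \<Union>\<C>
             \<and> \<not> (\<exists>F. finite F \<and> F \<subseteq> \<C> \<and> topspace X \<subseteq> \<Union>F)" by (intro conjI)
          then have "\<exists>\<C>. (\<forall>C\<in>\<C>. openin X C) \<and> (\<forall>U\<in>\<C>. \<forall>V\<in>\<C>. U \<subseteq> V \<or> V \<subseteq> U) \<and> topspace X \<subseteq> \<Union>\<C>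
             \<and> \<not> (\<exists>F. finite F \<and> F \<subseteq> \<C> \<and> topspace X \<subseteq> \<Union>F)" by (rule exI)
          with H0 show False by contradiction
        qed
      qed
      then show False using \<open>\<not> compactin X (topspace X)\<close> by contradiction
    qed
    then obtain \<C> where C1: "\<forall>C\<in>\<C>. openin X C" and C2: "\<forall>U\<in>\<C>. \<forall>V\<in>\<C>. U \<subseteq> V \<or> V \<subseteq> U"
      and C3: "topspace X \<subseteq> \<Union>\<C>" and C4: "\<not> (\<exists>F. finite F \<and> F \<subseteq> \<C> \<and> topspace X \<subseteq> \<Union>F)"
      by (elim exE conjE)
    show ?thesis
    proof (rule that[OF C1 C2 C3])
      fix F assume "finite F" "F \<subseteq> \<C>"
      then show "\<not> topspace X \<subseteq> \<Union>F" using C4 by blast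
    qed
  qed
  define B where "B V = f ` (topspace X - V)" for V
  have Bcl: "closedin Y (B V)" if "V \<in> \<V>" for V
    unfolding B_def using cc_closed_image_closed[OF X f CY] Vop that by blast
  have Bne: "B V \<noteq> {}" if "V \<in> \<V>" for V
    using Vnf[of "{V}"] that by (auto simp: B_def)
  have Vne: "\<V> \<noteq> {}" using Vcov ne by auto
  have fX: "f ` topspace X \<subseteq> topspace Y"
    using f continuous_map_image_subset_topspace by blast
  have "\<exists>c. \<forall>V\<in>\<V>. c \<in> B V"
  proof (rule ccontr)
    assume nc': "\<not> (\<exists>c. \<forall>V\<in>\<V>. c \<in> B V)"
    define O' where "O' V = topspace Y - B V" for V
    have "\<forall>U\<in>O' ` \<V>. openin Y U" using Bcl by (auto simp: O'_def)
    moreover have "f ` topspace X \<subseteq> \<Union>(O' ` \<V>)"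
      using nc' fX by (fastforce simp: O'_def)
    ultimately obtain G where G: "finite G" "G \<subseteq> O' ` \<V>" "f ` topspace X \<subseteq> \<Union>G"
      by (rule compactinE[OF comp])
    then obtain G' where G': "G' \<subseteq> \<V>" "finite G'" "G = O' ` G'"
      by (meson finite_subset_image)
    show False
    proof (cases "G' = {}")
      case True
      then show False using G G' ne by auto
    next
      case False
      have "subset.chain UNIV G'" using Vch G' by (auto simp: subset_chain_def)
      then have V0: "\<Union>G' \<in> G'" using Union_in_chain G' False by blast
      have "B (\<Union>G') \<subseteq> B V" if "V \<in> G'" for V
        using that by (auto simp: B_def)
      then have "\<Union>G \<subseteq> O' (\<Union>G')" using G' by (auto simp: O'_def)
      moreover have "B (\<Union>G') \<subseteq> f ` topspace X" by (auto simp: B_def)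
      moreover obtain b where "b \<in> B (\<Union>G')" using Bne[of "\<Union>G'"] V0 G' by blast
      ultimately have "b \<in> O' (\<Union>G')" using G(3) by blast
      then show False using \<open>b \<in> B (\<Union>G')\<close> by (simp add: O'_def)
    qed
  qed
  then obtain c where c: "\<And>V. V \<in> \<V> \<Longrightarrow> c \<in> B V" by blast
  obtain V1 where "V1 \<in> \<V>" using Vne by blast
  then have cY: "c \<in> topspace Y" using c fX by (auto simp: B_def)
  define Fb where "Fb = {x \<in> topspace X. f x = c}"
  have Fcl: "closedin X Fb"
  proof -
    have "closedin Y {c}" using closedin_t1_singleton[OF Hausdorff_imp_t1_space[OF HY] cY] .
    from closedin_continuous_map_preimage[OF f this] show ?thesis unfolding Fb_def by simp
  qed
  have "\<not> Lindelof_in X Fb"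
  proof
    assume L: "Lindelof_in X Fb"
    have "Fb \<subseteq> \<Union>\<V>" using Vcov by (auto simp: Fb_def)
    then obtain \<V>' where V': "countable \<V>'" "\<V>' \<subseteq> \<V>" "Fb \<subseteq> \<Union>\<V>'"
      using L Vop unfolding Lindelof_in_iff by meson
    have "countable (insert (topspace X - Fb) \<V>')" using V' by simp
    moreover have "\<forall>W\<in>insert (topspace X - Fb) \<V>'. openin X W" using V' Vop Fcl by auto
    moreover have "topspace X \<subseteq> \<Union>(insert (topspace X - Fb) \<V>')" using V' by auto
    ultimately obtain \<W> where W: "finite \<W>" "\<W> \<subseteq> insert (topspace X - Fb) \<V>'" "topspace X \<subseteq> \<Union>\<W>"
      by (rule ccE[OF X])
    define G where "G = \<W> - {topspace X - Fb}"
    have G1: "finite G" using W(1) by (simp add: G_def)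
    have G2: "G \<subseteq> \<V>" using W(2) V'(2) by (auto simp: G_def)
    have G3: "Fb \<subseteq> \<Union>G"
    proof
      fix x assume x: "x \<in> Fb"
      then have "x \<in> topspace X" by (simp add: Fb_def)
      then obtain W0 where "W0 \<in> \<W>" "x \<in> W0" using W(3) by blast
      moreover have "W0 \<noteq> topspace X - Fb" using x \<open>x \<in> W0\<close> by blast
      ultimately show "x \<in> \<Union>G" by (auto simp: G_def)
    qed
    note G = G1 G2 G3
    obtain x0 where x0: "x0 \<in> topspace X" "x0 \<notin> V1" "f x0 = c"
      using c[OF \<open>V1 \<in> \<V>\<close>] by (auto simp: B_def)
    then have "x0 \<in> Fb" by (simp add: Fb_def)
    then have Gne: "G \<noteq> {}" using G by auto
    have "subset.chain UNIV G" using Vch G by (auto simp: subset_chain_def)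
    then have V0: "\<Union>G \<in> G" using Union_in_chain G Gne by blast
    then obtain x where "x \<in> topspace X" "x \<notin> \<Union>G" "f x = c"
      using c G by (force simp: B_def)
    then show False using G by (auto simp: Fb_def)
  qed
  then show ?thesis using cY Fb_def by blast
qed


lemma EC_from_key:
  assumes f: "continuous_map X Y f" and cY: "c \<in> topspace Y"
    and nL: "\<not> Lindelof_in X {x \<in> topspace X. f x = c}"
    and gd: "gdelta_in Y {c}"
    and key: "\<And>C. closedin Y C \<Longrightarrow> c \<notin> C \<Longrightarrow> Lindelof_in X {x \<in> topspace X. f x \<in> C}"
  shows "\<exists>Z. Lindelof_in X Z \<and> (\<exists>c. f ` (topspace X - Z) = {c})"
proof -
  have "fsigma_in Y (topspace Y - {c})" using gd gdelta_in_fsigma_in by blast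
  then have "\<exists>\<U>. countable \<U> \<and> \<U> \<subseteq> Collect (closedin Y) \<and> \<Union>\<U> = topspace Y - {c}"
    by (simp add: fsigma_in_def union_of_def)
  then obtain \<U> where U0: "countable \<U>" "\<U> \<subseteq> Collect (closedin Y)" "\<Union>\<U> = topspace Y - {c}"
    by (elim exE conjE)
  have U: "countable \<U>" "\<forall>U\<in>\<U>. closedin Y U" "\<Union>\<U> = topspace Y - {c}"
    using U0 by auto
  define P where "P C = {x \<in> topspace X. f x \<in> C}" for C
  define Z where "Z = topspace X - {x \<in> topspace X. f x = c}"
  have fX: "f x \<in> topspace Y" if "x \<in> topspace X" for x
    using continuous_map_image_subset_topspace[OF f] that by blast
  have Zeq: "Z = \<Union>(P ` \<U>)" using U fX by (auto simp: Z_def P_def)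
  have "Lindelof_space (subtopology X (\<Union>(P ` \<U>)))"
  proof (rule Lindelof_space_Union)
    show "countable (P ` \<U>)" using U by simp
    fix V assume "V \<in> P ` \<U>"
    then obtain U' where "U' \<in> \<U>" "V = P U'" by blast
    moreover have "c \<notin> U'" using U \<open>U' \<in> \<U>\<close> by blast
    moreover have "closedin Y U'" using U(2) \<open>U' \<in> \<U>\<close> by blast
    ultimately have "Lindelof_in X V" using key unfolding P_def by simp
    then show "Lindelof_space (subtopology X V)" by (simp add: Lindelof_in_def)
  qed
  moreover have "Z \<subseteq> topspace X" by (auto simp: Z_def)
  ultimately have LZ: "Lindelof_in X Z" using Zeq by (simp add: Lindelof_in_def)
  have "{x \<in> topspace X. f x = c} \<noteq> {}"
  proof
    assume e: "{x \<in> topspace X. f x = c} = {}"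
    have "Lindelof_space (subtopology X {})" by (rule Lindelof_space_topspace_empty) simp
    then have "Lindelof_in X {}" by (simp add: Lindelof_in_def)
    then show False using nL e by simp
  qed
  then have "f ` (topspace X - Z) = {c}" by (auto simp: Z_def)
  then show ?thesis using LZ by blast
qed

theorem theorem3p8:
  fixes X :: "'a topology" and Y :: "'b topology" and K :: "'k set"
  assumes "Hausdorff_space X" and "Hausdorff_space Y"
    and "countably_compact_space X" and "\<not> compact_space X"
    and "linear_Lindelof_number_is X K" and "uncountable K"
    and "aleph0_K_compact Y K" and "C_closed Y"
  shows "((\<forall>f. continuous_map X Y f \<longrightarrow>
            compactin Y (f ` topspace X) \<and>
            (\<exists>c \<in> topspace Y. \<not> Lindelof_in X {x \<in> topspace X. f x = c})))
         \<and> (IC X \<and> G_delta_points Y \<longrightarrow> EC X Y)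
         \<and> (I0 X \<and> Tychonoff_space Y \<and> G_delta_points Y \<longrightarrow> EC X Y)"
proof -
  have LL: "linear_Lindelof_bound X K" using assms(5) linear_Lindelof_number_is_def by blast
  have A: "compactin Y (f ` topspace X) \<and>
            (\<exists>c \<in> topspace Y. \<not> Lindelof_in X {x \<in> topspace X. f x = c})"
    if f: "continuous_map X Y f" for f
  proof -
    have "compactin Y (f ` topspace X)"
      using image_compact[OF assms(3,4) LL assms(7,8) f] .
    then show ?thesis using nonLindelof_fiber[OF assms(3,4,2,8) f] by blast
  qed
  have fib_closed: "closedin X {x \<in> topspace X. f x \<in> C}"
    if f: "continuous_map X Y f" and "closedin Y C" for f C
    using closedin_continuous_map_preimage[OF f that(2)] .
  have B: "EC X Y" if IC: "IC X" and GD: "G_delta_points Y"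
    unfolding EC_def
  proof (intro allI impI)
    fix f assume f: "continuous_map X Y f"
    obtain c where c: "c \<in> topspace Y" "\<not> Lindelof_in X {x \<in> topspace X. f x = c}"
      using A[OF f] by blast
    have Fcl: "closedin X {x \<in> topspace X. f x = c}"
      using fib_closed[OF f closedin_t1_singleton[OF Hausdorff_imp_t1_space[OF assms(2)] c(1)]] by simp
    show "\<exists>Z. Lindelof_in X Z \<and> (\<exists>c. f ` (topspace X - Z) = {c})"
    proof (rule EC_from_key[OF f c])
      have "\<forall>y\<in>topspace Y. gdelta_in Y {y}" using GD by (simp only: G_delta_points_def)
      then show "gdelta_in Y {c}" using c(1) by blast
      fix C assume C: "closedin Y C" "c \<notin> C"
      have dis: "{x \<in> topspace X. f x = c} \<inter> {x \<in> topspace X. f x \<in> C} = {}" using C by auto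
      then show "Lindelof_in X {x \<in> topspace X. f x \<in> C}"
      proof -
        have ICd: "\<forall>A B. closedin X A \<and> closedin X B \<and> A \<inter> B = {} \<longrightarrow> Lindelof_in X A \<or> Lindelof_in X B"
          using IC by (simp only: IC_def)
        have "Lindelof_in X {x \<in> topspace X. f x = c} \<or> Lindelof_in X {x \<in> topspace X. f x \<in> C}"
          using ICd[rule_format, OF conjI[OF Fcl conjI[OF fib_closed[OF f C(1)] dis]]] .
        then show ?thesis using c(2) by simp
      qed
    qed
  qed
  have C: "EC X Y" if I0: "I0 X" and TY: "Tychonoff_space Y" and GD: "G_delta_points Y"
    unfolding EC_def
  proof (intro allI impI)
    fix f assume f: "continuous_map X Y f"
    obtain c where c: "c \<in> topspace Y" "\<not> Lindelof_in X {x \<in> topspace X. f x = c}"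
      using A[OF f] by blast
    have Fcl: "closedin X {x \<in> topspace X. f x = c}"
      using fib_closed[OF f closedin_t1_singleton[OF Hausdorff_imp_t1_space[OF assms(2)] c(1)]] by simp
    show "\<exists>Z. Lindelof_in X Z \<and> (\<exists>c. f ` (topspace X - Z) = {c})"
    proof (rule EC_from_key[OF f c])
      have "\<forall>y\<in>topspace Y. gdelta_in Y {y}" using GD by (simp only: G_delta_points_def)
      then show "gdelta_in Y {c}" using c(1) by blast
      fix C assume C: "closedin Y C" "c \<notin> C"
      have CR: "completely_regular_space Y" using TY by (simp add: Tychonoff_space_def)
      have "\<exists>g::'b\<Rightarrow>real. continuous_map Y (top_of_set {0..1}) g \<and> g c = 0 \<and> (g ` C \<subseteq> {1})"
        using CR[unfolded completely_regular_space_def, rule_format, of C c] C c(1) by simp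
      then obtain g :: "'b \<Rightarrow> real" where g: "continuous_map Y (top_of_set {0..(1::real)}) g" "g c = 0" "g ` C \<subseteq> {1}"
        by (elim exE conjE)
      have gf: "continuous_map X (top_of_set {0..(1::real)}) (g \<circ> f)"
        using continuous_map_compose[OF f g(1)] .
      have neg: "continuous_map (top_of_set {0..(1::real)}) (top_of_set {0..(1::real)}) (\<lambda>t. 1 - t)"
        by (auto simp: continuous_map_subtopology_eu intro!: continuous_intros)
      have gf2: "continuous_map X (top_of_set {0..(1::real)}) ((\<lambda>t. 1 - t) \<circ> (g \<circ> f))"
        using continuous_map_compose[OF gf neg] .
      define Z1 where "Z1 = {x \<in> topspace X. (g \<circ> f) x = 0}"
      define Z2 where "Z2 = {x \<in> topspace X. ((\<lambda>t. 1 - t) \<circ> (g \<circ> f)) x = 0}"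
      have z1: "zero_set_in X Z1" unfolding zero_set_in_def Z1_def by (rule exI[of _ "g \<circ> f"]) (simp only: gf simp_thms)
      have z2: "zero_set_in X Z2" unfolding zero_set_in_def Z2_def
        by (rule exI[of _ "(\<lambda>t. 1 - t) \<circ> (g \<circ> f)"]) (simp only: gf2 simp_thms)
      have "Z1 \<inter> Z2 = {}" by (auto simp: Z1_def Z2_def)
      moreover have I0d: "\<forall>A B. zero_set_in X A \<and> zero_set_in X B \<and> A \<inter> B = {} \<longrightarrow> Lindelof_in X A \<or> Lindelof_in X B"
          using I0 by (simp only: I0_def)
      ultimately have "Lindelof_in X Z1 \<or> Lindelof_in X Z2" using z1 z2 by blast
      moreover have "{x \<in> topspace X. f x = c} \<subseteq> Z1" using g by (auto simp: Z1_def)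
      moreover have "{x \<in> topspace X. f x \<in> C} \<subseteq> Z2" using g by (auto simp: Z2_def)
      ultimately show "Lindelof_in X {x \<in> topspace X. f x \<in> C}"
      proof (elim disjE)
        assume "Lindelof_in X Z1" "{x \<in> topspace X. f x = c} \<subseteq> Z1"
        then have "Lindelof_in X {x \<in> topspace X. f x = c}" using Lindelof_in_closed_subset Fcl by blast
        then show ?thesis using c(2) by contradiction
      next
        assume "Lindelof_in X Z2" "{x \<in> topspace X. f x \<in> C} \<subseteq> Z2"
        then show ?thesis using Lindelof_in_closed_subset fib_closed[OF f C(1)] by blast
      qed
    qed
  qed
  have P1: "\<forall>f. continuous_map X Y f \<longrightarrow> compactin Y (f ` topspace X) \<and>
            (\<exists>c \<in> topspace Y. \<not> Lindelof_in X {x \<in> topspace X. f x = c})"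
    by (intro allI impI) (rule A)
  have P2: "IC X \<and> G_delta_points Y \<longrightarrow> EC X Y" using B by blast
  have P3: "I0 X \<and> Tychonoff_space Y \<and> G_delta_points Y \<longrightarrow> EC X Y" using C by blast
  from P1 P2 P3 show ?thesis by (intro conjI)
qed

end
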